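(* Let $(D,D_{t'})$ be a proper pair (with $t'\geq 1$) such that the unrolled DAG $D_{t'}$ has no contemporaneous edges, and assume that the $d$-separation Markov property holds in $D_{t'}$ for the time series with baseline variables $X$ with index sets $(V,W)$. Let $A,B,C\subseteq V\cup W$ be pairwise disjoint with $B\subseteq V$. If $B$ is $\delta$-separated from $A$ given $C$ in $D$, then $X^B$ is locally independent of $X^A$ given $X^C$ until time $t'$.
   Context: Time series with baseline variables: $V$ and $W$ are finite disjoint index sets. $X=\{X_t\}_{t\ge 0}$ is a stochastic process such that $X_0$ is a random vector with entries indexed by $V\cup W$ (coordinate processes at time $0$ together with baseline variables) and, for $t\geq 1$, $X_t$ is a random vector with entries indexed by $V$. For $A\subseteq V\cup W$, $X_t^A$ is the subvector indexed by $A$ and $\overline X_t^A=\{X_s^i: i\in A, s\le t\}$ (a baseline variable $i\in W$ only appears at $s=0$). Local independence (Granger non-causality): for pairwise disjoint $A,B,C\subseteq V\cup W$ with $B\subseteq V$, $X^B$ is locally independent of $X^A$ given $X^C$ until time $t'$ if for every $t=1,\dots,t'$, $\overline X^A_{t-1}$ and $X^B_t$ are conditionally independent given $\overline X^{B\cup C}_{t-1}$. Graphs: a directed graph (DG) has node set and directed edges $i\to j$ (at most one edge from $i$ to $j$; both $i\to j$ and $j\to i$ may occur; self-loops allowed). A walk is an alternating sequence of nodes and edges with each edge between consecutive nodes; a path is a walk with no repeated node. A non-endpoint node $k$ on a path is a collider if both adjacent edges have heads at $k$ ($\to k\leftarrow$), otherwise a noncollider. $\mathrm{an}(C)$ is the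 set of nodes $k$ having a directed path to some node of $C$ with $k\ne$ that node; $\mathrm{an}^{+}(C)=\mathrm{an}(C)\cup C$. A DAG is a DG without directed cycles. $\delta$-separation: for a DG $D$ on $V\cup W$ and $B\subseteq V\cup W$, $D^B$ is obtained from $D$ by deleting every edge $i\to j$ with $i\in B$. For disjoint $A,B,C$, $B$ is $\delta$-separated from $A$ given $C$ in $D$ if every path in $D^B$ between a node of $A$ and a node of $B$ contains a noncollider in $C$ or a collider not in $\mathrm{an}_D(C)\cup C$ (ancestors computed in $D$). $d$-separation in a DAG is the same condition applied to paths in the DAG itself (no edge deletion), and is symmetric. Unrolling: for a DG $D$ on $V\cup W$ ($W$ = baseline nodes), its unrolled version on $t'$ lags is the DAG $D_{t'}$ on nodes $V^{t'}\cup W^{t'}$, $V^{t'}=\bigcup_{i\in V}\{\nu_0^i,\dots,\nu_{t'}^i\}$, $W^{t'}=\{\nu_0^i:i\in W\}$, with $\nu_s^i\to\nu_t^j$ iff $s<t$ and $i\to j$ in $D$. Rolling: for a DAG $D_{t'}$ on such a node set, its rolled version is the DG $D$ on $V\cup W$ with $i\to j$ iff $\nu_s^i\to\nu_t^j$ in $D_{t'}$ for some $s<t$. An edge $\nu_s^i\to\nu_t^j$ is contemporaneous if $s=t$. The pair $(D,D_{t'})$ is proper if $D$ is the rolled version of $D_{t'}$ or $D_{t'}$ is the unrolled version of $D$. Node $\nu_s^i$ represents the random variable $X_s^i$; for a node set $a$, $x^a$ is the corresponding set of variables; $\nu_t^A=\{\nu_t^i:i\in A\}$, $\bar\nu_t^A=\{\nu_s^i:i\in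 A,s\le t\}$. The $d$-separation Markov property holds in $D_{t'}$ if for all disjoint node sets $a,b,c$, $a$ and $b$ $d$-separated by $c$ in $D_{t'}$ implies $x^a$ and $x^b$ conditionally independent given $x^c$. *)

theory Defs
  imports "HOL-Probability.Probability"
begin

text \<open>A directed graph is an edge set E (pairs (i,j) meaning i -> j).
  A path is a nonempty list of distinct nodes ns together with a list of
  orientations ds: ds!k = True means the k-th edge is ns!k -> ns!(k+1),
  ds!k = False means it is ns!(k+1) -> ns!k.\<close>

definition is_path :: "('n \<times> 'n) set \<Rightarrow> 'n list \<Rightarrow> bool list \<Rightarrow> bool" where
  "is_path E ns ds \<longleftrightarrow> ns \<noteq> [] \<and> distinct ns \<and> length ds = length ns - 1 \<and>
     (\<forall>k < length ds. if ds ! k then (ns ! k, ns ! Suc k) \<in> E else (ns ! Suc k, ns ! k) \<in> E)"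

text \<open>Non-endpoint position k (0 < k < length ns - 1) is a collider iff both
  adjacent edges point into ns!k.\<close>
definition is_collider :: "bool list \<Rightarrow> nat \<Rightarrow> bool" where
  "is_collider ds k \<longleftrightarrow> ds ! (k - 1) \<and> \<not> ds ! k"

definition anc :: "('n \<times> 'n) set \<Rightarrow> 'n set \<Rightarrow> 'n set" where
  "anc E C = {k. \<exists>c\<in>C. k \<noteq> c \<and> (k, c) \<in> E\<^sup>+}"

definition blocked :: "('n \<times> 'n) set \<Rightarrow> 'n set \<Rightarrow> 'n list \<Rightarrow> bool list \<Rightarrow> bool" where
  "blocked E C ns ds \<longleftrightarrow> (\<exists>k. 0 < k \<and> k < length ns - 1 \<and>
      ((\<not> is_collider ds k \<and> ns ! k \<in> C) \<or>
       (is_collider ds k \<and> ns ! k \<notin> anc E C \<union> C)))"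

definition del_out :: "('n \<times> 'n) set \<Rightarrow> 'n set \<Rightarrow> ('n \<times> 'n) set" where
  "del_out E B = {(i, j) \<in> E. i \<notin> B}"

definition delta_sep :: "('n \<times> 'n) set \<Rightarrow> 'n set \<Rightarrow> 'n set \<Rightarrow> 'n set \<Rightarrow> bool" where
  "delta_sep E A B C \<longleftrightarrow> (\<forall>ns ds. is_path (del_out E B) ns ds \<and>
      ((hd ns \<in> A \<and> last ns \<in> B) \<or> (hd ns \<in> B \<and> last ns \<in> A)) \<longrightarrow> blocked E C ns ds)"

definition d_sep :: "('n \<times> 'n) set \<Rightarrow> 'n set \<Rightarrow> 'n set \<Rightarrow> 'n set \<Rightarrow> bool" where
  "d_sep E a b c \<longleftrightarrow> (\<forall>ns ds. is_path E ns ds \<and>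
      ((hd ns \<in> a \<and> last ns \<in> b) \<or> (hd ns \<in> b \<and> last ns \<in> a)) \<longrightarrow> blocked E c ns ds)"

text \<open>Node nu_s^i is represented by the pair (i, s).
  Node set V^t' \<union> W^t'.\<close>
definition unrolled_nodes :: "'v set \<Rightarrow> 'v set \<Rightarrow> nat \<Rightarrow> ('v \<times> nat) set" where
  "unrolled_nodes V W t' = {(i, s). i \<in> V \<and> s \<le> t'} \<union> {(i, 0) | i. i \<in> W}"

definition is_DG_on :: "'v set \<Rightarrow> ('v \<times> 'v) set \<Rightarrow> bool" where
  "is_DG_on N E \<longleftrightarrow> E \<subseteq> N \<times> N"

definition is_unrolled_DAG :: "'v set \<Rightarrow> 'v set \<Rightarrow> nat \<Rightarrow> (('v \<times> nat) \<times> ('v \<times> nat)) set \<Rightarrow> bool" where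
  "is_unrolled_DAG V W t' Et \<longleftrightarrow> Et \<subseteq> unrolled_nodes V W t' \<times> unrolled_nodes V W t' \<and>
     (\<forall>i s j t. ((i, s), (j, t)) \<in> Et \<longrightarrow> s \<le> t) \<and> acyclic Et"

definition unroll :: "'v set \<Rightarrow> 'v set \<Rightarrow> nat \<Rightarrow> ('v \<times> 'v) set \<Rightarrow> (('v \<times> nat) \<times> ('v \<times> nat)) set" where
  "unroll V W t' E = {((i, s), (j, t)). (i, s) \<in> unrolled_nodes V W t' \<and>
      (j, t) \<in> unrolled_nodes V W t' \<and> s < t \<and> (i, j) \<in> E}"

definition roll :: "(('v \<times> nat) \<times> ('v \<times> nat)) set \<Rightarrow> ('v \<times> 'v) set" where
  "roll Et = {(i, j). \<exists>s t. s < t \<and> ((i, s), (j, t)) \<in> Et}"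

definition proper_pair :: "'v set \<Rightarrow> 'v set \<Rightarrow> nat \<Rightarrow> ('v \<times> 'v) set \<Rightarrow> (('v \<times> nat) \<times> ('v \<times> nat)) set \<Rightarrow> bool" where
  "proper_pair V W t' E Et \<longleftrightarrow> is_DG_on (V \<union> W) E \<and> is_unrolled_DAG V W t' Et \<and>
     (E = roll Et \<or> Et = unroll V W t' E)"

definition no_contemporaneous :: "(('v \<times> nat) \<times> ('v \<times> nat)) set \<Rightarrow> bool" where
  "no_contemporaneous Et \<longleftrightarrow> (\<forall>i j s. ((i, s), (j, s)) \<notin> Et)"

definition gen_sigma :: "'a measure \<Rightarrow> ('n \<Rightarrow> 'a \<Rightarrow> real) \<Rightarrow> 'n set \<Rightarrow> 'a measure" where
  "gen_sigma M Y a = sigma (space M) (\<Union>n\<in>a. {Y n -` S \<inter> space M | S. S \<in> sets borel})"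

definition cond_indep :: "'a measure \<Rightarrow> ('n \<Rightarrow> 'a \<Rightarrow> real) \<Rightarrow> 'n set \<Rightarrow> 'n set \<Rightarrow> 'n set \<Rightarrow> bool" where
  "cond_indep M Y a b c \<longleftrightarrow>
     (\<forall>E \<in> sets (gen_sigma M Y a). \<forall>F \<in> sets (gen_sigma M Y b).
        AE \<omega> in M. real_cond_exp M (gen_sigma M Y c) (indicator (E \<inter> F)) \<omega> =
          real_cond_exp M (gen_sigma M Y c) (indicator E) \<omega> *
          real_cond_exp M (gen_sigma M Y c) (indicator F) \<omega>)"

text \<open>X i s is the random variable X_s^i; meaningful for (i,s) in the unrolled node set
  (baseline variables i \<in> W only at s = 0).\<close>
definition time_series :: "'a measure \<Rightarrow> 'v set \<Rightarrow> 'v set \<Rightarrow> ('v \<Rightarrow> nat \<Rightarrow> 'a \<Rightarrow> real) \<Rightarrow> bool" where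
  "time_series M V W X \<longleftrightarrow> prob_space M \<and> finite V \<and> finite W \<and> V \<inter> W = {} \<and>
     (\<forall>i s. (i \<in> V \<or> (i \<in> W \<and> s = 0)) \<longrightarrow> X i s \<in> borel_measurable M)"

definition node_var :: "('v \<Rightarrow> nat \<Rightarrow> 'a \<Rightarrow> real) \<Rightarrow> 'v \<times> nat \<Rightarrow> 'a \<Rightarrow> real" where
  "node_var X n = X (fst n) (snd n)"

definition dsep_markov :: "'a measure \<Rightarrow> 'v set \<Rightarrow> 'v set \<Rightarrow> nat \<Rightarrow> ('v \<Rightarrow> nat \<Rightarrow> 'a \<Rightarrow> real)
    \<Rightarrow> (('v \<times> nat) \<times> ('v \<times> nat)) set \<Rightarrow> bool" where
  "dsep_markov M V W t' X Et \<longleftrightarrow>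
     (\<forall>a b c. a \<subseteq> unrolled_nodes V W t' \<and> b \<subseteq> unrolled_nodes V W t' \<and> c \<subseteq> unrolled_nodes V W t' \<and>
        a \<inter> b = {} \<and> a \<inter> c = {} \<and> b \<inter> c = {} \<and> d_sep Et a b c \<longrightarrow>
        cond_indep M (node_var X) a b c)"

definition past_nodes :: "'v set \<Rightarrow> 'v set \<Rightarrow> 'v set \<Rightarrow> nat \<Rightarrow> ('v \<times> nat) set" where
  "past_nodes V W A t = {(i, s) \<in> unrolled_nodes V W t. i \<in> A}"

definition now_nodes :: "'v set \<Rightarrow> nat \<Rightarrow> ('v \<times> nat) set" where
  "now_nodes B t = {(i, t) | i. i \<in> B}"

definition locally_indep :: "'a measure \<Rightarrow> 'v set \<Rightarrow> 'v set \<Rightarrow> ('v \<Rightarrow> nat \<Rightarrow> 'a \<Rightarrow> real)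
    \<Rightarrow> 'v set \<Rightarrow> 'v set \<Rightarrow> 'v set \<Rightarrow> nat \<Rightarrow> bool" where
  "locally_indep M V W X A B C t' \<longleftrightarrow>
     (\<forall>t \<in> {1..t'}. cond_indep M (node_var X) (past_nodes V W A (t - 1)) (now_nodes B t)
        (past_nodes V W (B \<union> C) (t - 1)))"

end

theory Submission
  imports Defs
begin

definition walk :: "('n \<times> 'n) set \<Rightarrow> 'n list \<Rightarrow> bool list \<Rightarrow> bool" where
 "walk G ns ds \<longleftrightarrow> ns \<noteq> [] \<and> length ds = length ns - 1 \<and>
   (\<forall>k < length ds. if ds ! k then (ns ! k, ns ! Suc k) \<in> G else (ns ! Suc k, ns ! k) \<in> G)"

definition good :: "('n \<times> 'n) set \<Rightarrow> 'n set \<Rightarrow> 'n list \<Rightarrow> bool list \<Rightarrow> bool" where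
 "good E C ns ds \<longleftrightarrow> (\<forall>k. 0 < k \<and> k < length ns - 1 \<longrightarrow>
     (\<not> is_collider ds k \<longrightarrow> ns ! k \<notin> C) \<and> (is_collider ds k \<longrightarrow> ns ! k \<in> anc E C \<union> C))"

lemma path_walk: "is_path G ns ds \<longleftrightarrow> walk G ns ds \<and> distinct ns"
  by (auto simp: is_path_def walk_def)

lemma blocked_good: "blocked E C ns ds \<longleftrightarrow> \<not> good E C ns ds"
  by (auto simp: blocked_def good_def)

lemma anc_up:
  assumes "(x, y) \<in> E\<^sup>*" "y \<in> anc E C \<union> C"
  shows "x \<in> anc E C \<union> C"
proof (cases "x = y")
  case True then show ?thesis using assms by simp
next
  case False
  then have xy: "(x, y) \<in> E\<^sup>+" using assms(1) by (meson rtranclD)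
  show ?thesis
  proof (cases "y \<in> C")
    case True then show ?thesis using xy False by (auto simp: anc_def)
  next
    case False
    then obtain c where "c \<in> C" "(y, c) \<in> E\<^sup>+" using assms(2) by (auto simp: anc_def)
    then have "(x, c) \<in> E\<^sup>+" using xy by simp
    then show ?thesis using \<open>c \<in> C\<close> by (auto simp: anc_def)
  qed
qed

lemma walk_edgeE:
  assumes "walk G ns ds" "k < length ds"
  shows "if ds ! k then (ns ! k, ns ! Suc k) \<in> G else (ns ! Suc k, ns ! k) \<in> G"
  using assms by (auto simp: walk_def)

lemma chain_anc:
  assumes "walk G ns ds" "G \<subseteq> E" "good E C ns ds" "p < j" "j < length ds" "ds ! p" "\<not> ds ! j"
  shows "ns ! p \<in> anc E C \<union> C"
  using assms
proof (induction "j - p" arbitrary: p)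
  case 0 then show ?case by simp
next
  case (Suc d)
  have len: "length ds = length ns - 1" using Suc.prems by (auto simp: walk_def)
  have e: "(ns ! p, ns ! Suc p) \<in> E" using walk_edgeE[OF Suc.prems(1), of p] Suc.prems by auto
  show ?case
  proof (cases "ds ! Suc p")
    case True
    then have "Suc p < j" using Suc.prems by (cases "Suc p = j") auto
    moreover have "d = j - Suc p" using Suc.hyps(2) by arith
    ultimately have "ns ! Suc p \<in> anc E C \<union> C" using Suc.hyps(1)[of "Suc p"] Suc.prems True by auto
    then show ?thesis using e anc_up by (metis r_into_rtrancl)
  next
    case False
    then have "is_collider ds (Suc p)" using Suc.prems by (simp add: is_collider_def)
    moreover have "0 < Suc p" "Suc p < length ns - 1" using Suc.prems len by auto
    ultimately have "ns ! Suc p \<in> anc E C \<union> C" using Suc.prems(3) by (auto simp: good_def)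
    then show ?thesis using e anc_up by (metis r_into_rtrancl)
  qed
qed

lemma app_nth1: "k < length ns1 \<Longrightarrow> (ns1 @ ns2) ! k = ns1 ! k"
  by (simp add: nth_append)

lemma app_nth2:
  assumes "ns1 \<noteq> []" "ns2 \<noteq> []" "last ns1 = hd ns2" "m < length ns2"
  shows "(ns1 @ tl ns2) ! (length ns1 - 1 + m) = ns2 ! m"
proof (cases m)
  case 0 then show ?thesis using assms
    by (simp add: nth_append last_conv_nth hd_conv_nth)
next
  case (Suc m')
  obtain x xs where "ns1 = x # xs" using assms by (cases ns1) auto
  then show ?thesis using assms Suc by (simp add: nth_append nth_tl)
qed

lemma last_app: "ns1 \<noteq> [] \<Longrightarrow> ns2 \<noteq> [] \<Longrightarrow> last ns1 = hd ns2 \<Longrightarrow> last (ns1 @ tl ns2) = last ns2"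
  by (cases ns2) auto

lemma walk_append:
  assumes w1: "walk G ns1 ds1" and w2: "walk G ns2 ds2" and j: "last ns1 = hd ns2"
  shows "walk G (ns1 @ tl ns2) (ds1 @ ds2)"
  unfolding walk_def
proof (intro conjI allI impI)
  have ne: "ns1 \<noteq> []" "ns2 \<noteq> []" and l1: "length ds1 = length ns1 - 1" and l2: "length ds2 = length ns2 - 1"
    using w1 w2 by (auto simp: walk_def)
  show "ns1 @ tl ns2 \<noteq> []" using ne by simp
  have "length ns1 \<ge> 1" "length ns2 \<ge> 1" using ne by (auto simp: Suc_le_eq)
  then show "length (ds1 @ ds2) = length (ns1 @ tl ns2) - 1" using l1 l2 by auto
  fix k assume k: "k < length (ds1 @ ds2)"
  show "if (ds1 @ ds2) ! k then ((ns1 @ tl ns2) ! k, (ns1 @ tl ns2) ! Suc k) \<in> G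
        else ((ns1 @ tl ns2) ! Suc k, (ns1 @ tl ns2) ! k) \<in> G"
  proof (cases "k < length ds1")
    case True
    then have "(ds1 @ ds2) ! k = ds1 ! k" "(ns1 @ tl ns2) ! k = ns1 ! k"
      "(ns1 @ tl ns2) ! Suc k = ns1 ! Suc k" using l1 ne by (auto simp: nth_append)
    then show ?thesis using walk_edgeE[OF w1 True] by simp
  next
    case False
    define m where "m = k - length ds1"
    have km: "k = length ns1 - 1 + m" using False l1 ne m_def by auto
    have mlt: "m < length ds2" using k False m_def by auto
    have "(ds1 @ ds2) ! k = ds2 ! m" using False m_def by (simp add: nth_append)
    moreover have "(ns1 @ tl ns2) ! k = ns2 ! m" using app_nth2[OF ne j, of m] km mlt l2 by simp
    moreover have "(ns1 @ tl ns2) ! Suc k = ns2 ! Suc m" using app_nth2[OF ne j, of "Suc m"] km mlt l2 ne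
      by (simp add: Suc_diff_1)
    ultimately show ?thesis using walk_edgeE[OF w2 mlt] by simp
  qed
qed

lemma good_append:
  assumes w1: "walk G ns1 ds1" and w2: "walk G ns2 ds2" and j: "last ns1 = hd ns2"
    and g1: "good E C ns1 ds1" and g2: "good E C ns2 ds2"
    and jn: "ds1 \<noteq> [] \<Longrightarrow> ds2 \<noteq> [] \<Longrightarrow>
      (\<not> (last ds1 \<and> \<not> hd ds2) \<longrightarrow> hd ns2 \<notin> C) \<and> (last ds1 \<and> \<not> hd ds2 \<longrightarrow> hd ns2 \<in> anc E C \<union> C)"
  shows "good E C (ns1 @ tl ns2) (ds1 @ ds2)"
  unfolding good_def
proof (intro allI impI)
  have ne: "ns1 \<noteq> []" "ns2 \<noteq> []" and l1: "length ds1 = length ns1 - 1" and l2: "length ds2 = length ns2 - 1"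
    using w1 w2 by (auto simp: walk_def)
  have g1': "length ns1 \<ge> 1" "length ns2 \<ge> 1" using ne by (auto simp: Suc_le_eq)
  fix k assume k: "0 < k \<and> k < length (ns1 @ tl ns2) - 1"
  then have k0: "0 < k" and kl: "k < length ds1 + length ds2" using l1 l2 g1' by auto
  let ?ns = "ns1 @ tl ns2" and ?ds = "ds1 @ ds2"
  consider (a) "k < length ds1" | (b) "k = length ds1" | (c) "k > length ds1" by linarith
  then show "(\<not> is_collider ?ds k \<longrightarrow> ?ns ! k \<notin> C) \<and> (is_collider ?ds k \<longrightarrow> ?ns ! k \<in> anc E C \<union> C)"
  proof cases
    case a
    then have "?ns ! k = ns1 ! k" "is_collider ?ds k = is_collider ds1 k"
      using l1 k0 by (auto simp: nth_append is_collider_def)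
    moreover have "k < length ns1 - 1" using a l1 by simp
    ultimately show ?thesis using g1 k0 unfolding good_def by auto
  next
    case b
    have dne: "ds1 \<noteq> []" "ds2 \<noteq> []" using b k0 kl by auto
    have "?ns ! k = hd ns2" using app_nth2[OF ne j, of 0] b l1 ne by (simp add: hd_conv_nth)
    moreover have "is_collider ?ds k = (last ds1 \<and> \<not> hd ds2)"
      using b dne by (simp add: is_collider_def nth_append last_conv_nth hd_conv_nth)
    ultimately show ?thesis using jn[OF dne] by simp
  next
    case c
    define m where "m = k - length ds1"
    have m0: "0 < m" and km: "k = length ns1 - 1 + m" using c l1 g1' m_def by auto
    have ml: "m < length ns2 - 1" using kl m_def l2 c by auto
    have "?ns ! k = ns2 ! m" using app_nth2[OF ne j, of m] km ml by simp
    moreover have "is_collider ?ds k = is_collider ds2 m"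
      using c m_def m0 by (auto simp: nth_append is_collider_def)
    ultimately show ?thesis using g2 m0 ml unfolding good_def by auto
  qed
qed

lemma walk_take:
  assumes "walk G ns ds" "k < length ns"
  shows "walk G (take (Suc k) ns) (take k ds)"
  using assms by (auto simp: walk_def)

lemma walk_drop:
  assumes "walk G ns ds" "k < length ns"
  shows "walk G (drop k ns) (drop k ds)"
  using assms by (auto simp: walk_def add.commute)

lemma good_take:
  assumes "good E C ns ds" "walk G ns ds" "k < length ns"
  shows "good E C (take (Suc k) ns) (take k ds)"
  using assms by (auto simp: good_def walk_def is_collider_def)

lemma good_drop:
  assumes "good E C ns ds" "walk G ns ds" "k < length ns"
  shows "good E C (drop k ns) (drop k ds)"
  unfolding good_def
proof (intro allI impI)
  fix j assume j: "0 < j \<and> j < length (drop k ns) - 1"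
  have "(\<not> is_collider ds (k + j) \<longrightarrow> ns ! (k + j) \<notin> C) \<and> (is_collider ds (k + j) \<longrightarrow> ns ! (k + j) \<in> anc E C \<union> C)"
  proof -
    have "k + j < length ns - 1" using j by auto
    then show ?thesis using assms(1)[unfolded good_def, rule_format, of "k+j"] j by auto
  qed
  moreover have "is_collider (drop k ds) j = is_collider ds (k + j)"
    using j assms by (auto simp: is_collider_def walk_def)
  ultimately show "(\<not> is_collider (drop k ds) j \<longrightarrow> drop k ns ! j \<notin> C) \<and>
         (is_collider (drop k ds) j \<longrightarrow> drop k ns ! j \<in> anc E C \<union> C)"
    using j assms by auto
qed

lemma walk_to_path:
  assumes "walk G ns ds" "G \<subseteq> E" "good E C ns ds"
  shows "\<exists>ns' ds'. is_path G ns' ds' \<and> good E C ns' ds' \<and> hd ns' = hd ns \<and> last ns' = last ns"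
  using assms
proof (induction "length ns" arbitrary: ns ds rule: less_induct)
  case less
  show ?case
  proof (cases "distinct ns")
    case True then show ?thesis using less.prems path_walk by blast
  next
    case False
    then obtain p q where pq: "p < q" "q < length ns" "ns ! p = ns ! q"
      by (metis distinct_conv_nth linorder_neqE_nat)
    have w: "walk G ns ds" and g: "good E C ns ds" using less.prems by auto
    have len: "length ds = length ns - 1" and ne: "ns \<noteq> []" using w by (auto simp: walk_def)
    let ?ns1 = "take (Suc p) ns" and ?ds1 = "take p ds" and ?ns2 = "drop q ns" and ?ds2 = "drop q ds"
    have w1: "walk G ?ns1 ?ds1" using walk_take[OF w, of p] pq by simp
    have w2: "walk G ?ns2 ?ds2" using walk_drop[OF w, of q] pq by simp
    have "last ?ns1 = ns ! p" using pq by (subst last_conv_nth) (auto simp: min_def)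
    then have j: "last ?ns1 = hd ?ns2" using pq by (simp add: hd_drop_conv_nth)
    have g1: "good E C ?ns1 ?ds1" using good_take[OF g w, of p] pq by simp
    have g2: "good E C ?ns2 ?ds2" using good_drop[OF g w, of q] pq by simp
    have jn: "(\<not> (last ?ds1 \<and> \<not> hd ?ds2) \<longrightarrow> hd ?ns2 \<notin> C) \<and> (last ?ds1 \<and> \<not> hd ?ds2 \<longrightarrow> hd ?ns2 \<in> anc E C \<union> C)"
      if dne: "?ds1 \<noteq> []" "?ds2 \<noteq> []"
    proof -
      have p0: "0 < p" and ql: "q < length ds" using dne pq len by auto
      have l1: "last ?ds1 = ds ! (p - 1)" using p0 ql pq by (subst last_conv_nth) (auto simp: min_def)
      have h2: "hd ?ds2 = ds ! q" using ql by (simp add: hd_drop_conv_nth)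
      have hn: "hd ?ns2 = ns ! q" using pq by (simp add: hd_drop_conv_nth)
      have pint: "0 < p \<and> p < length ns - 1" and qint: "0 < q \<and> q < length ns - 1"
        using p0 pq ql len by auto
      show ?thesis
      proof (intro conjI impI)
        assume nc: "\<not> (last ?ds1 \<and> \<not> hd ?ds2)"
        show "hd ?ns2 \<notin> C"
        proof (cases "ds ! (p - 1)")
          case False
          then have "\<not> is_collider ds p" by (simp add: is_collider_def)
          then show ?thesis using g pint hn pq unfolding good_def by auto
        next
          case True
          then have "ds ! q" using nc l1 h2 by simp
          then have "\<not> is_collider ds q" by (simp add: is_collider_def)
          then show ?thesis using g qint hn unfolding good_def by auto
        qed
      next
        assume co: "last ?ds1 \<and> \<not> hd ?ds2"
        show "hd ?ns2 \<in> anc E C \<union> C"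
        proof (cases "ds ! p")
          case False
          then have "is_collider ds p" using co l1 by (simp add: is_collider_def)
          then show ?thesis using g pint hn pq unfolding good_def by auto
        next
          case True
          have "ns ! p \<in> anc E C \<union> C"
            using chain_anc[OF w less.prems(2) g pq(1) ql True] co h2 by simp
          then show ?thesis using hn pq by simp
        qed
      qed
    qed
    have w': "walk G (?ns1 @ tl ?ns2) (?ds1 @ ?ds2)" using walk_append[OF w1 w2 j] .
    have g': "good E C (?ns1 @ tl ?ns2) (?ds1 @ ?ds2)" using good_append[OF w1 w2 j g1 g2 jn] by blast
    have lt: "length (?ns1 @ tl ?ns2) < length ns" using pq by auto
    obtain ns' ds' where r: "is_path G ns' ds'" "good E C ns' ds'" "hd ns' = hd (?ns1 @ tl ?ns2)"
      "last ns' = last (?ns1 @ tl ?ns2)"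
      using less.hyps[OF lt w' less.prems(2) g'] by blast
    have "hd (?ns1 @ tl ?ns2) = hd ns" using ne by (cases ns) auto
    moreover have "last (?ns1 @ tl ?ns2) = last ns"
      using last_app[of ?ns1 ?ns2] j pq ne by auto
    ultimately show ?thesis using r by auto
  qed
qed

lemma walk_rev:
  assumes "walk G ns ds"
  shows "walk G (rev ns) (rev (map Not ds))"
  unfolding walk_def
proof (intro conjI allI impI)
  have len: "length ds = length ns - 1" and ne: "ns \<noteq> []" using assms by (auto simp: walk_def)
  show "rev ns \<noteq> []" "length (rev (map Not ds)) = length (rev ns) - 1" using len ne by auto
  fix k assume k: "k < length (rev (map Not ds))"
  define i where "i = length ds - 1 - k"
  have i: "i < length ds" using k i_def by auto
  have "rev (map Not ds) ! k = (\<not> ds ! i)" using k i_def by (simp add: rev_nth)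
  moreover have "rev ns ! k = ns ! Suc i" using k i_def len by (simp add: rev_nth Suc_diff_Suc)
  moreover have "rev ns ! Suc k = ns ! i" using k i_def len by (simp add: rev_nth)
  ultimately show "if rev (map Not ds) ! k then (rev ns ! k, rev ns ! Suc k) \<in> G
       else (rev ns ! Suc k, rev ns ! k) \<in> G" using walk_edgeE[OF assms i] by auto
qed

lemma good_rev:
  assumes "walk G ns ds" "good E C ns ds"
  shows "good E C (rev ns) (rev (map Not ds))"
  unfolding good_def
proof (intro allI impI)
  have len: "length ds = length ns - 1" and ne: "ns \<noteq> []" using assms by (auto simp: walk_def)
  fix k assume k: "0 < k \<and> k < length (rev ns) - 1"
  define i where "i = length ns - 1 - k"
  have i: "0 < i \<and> i < length ns - 1" using k i_def by auto
  have kl: "k < length ns" using k by auto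
  have "rev ns ! k = ns ! i" using kl i_def by (simp add: rev_nth)
  moreover have "is_collider (rev (map Not ds)) k = is_collider ds i"
    using k i_def len by (auto simp: is_collider_def rev_nth Suc_diff_Suc)
  ultimately show "(\<not> is_collider (rev (map Not ds)) k \<longrightarrow> rev ns ! k \<notin> C) \<and>
       (is_collider (rev (map Not ds)) k \<longrightarrow> rev ns ! k \<in> anc E C \<union> C)"
    using assms(2)[unfolded good_def, rule_format, of i] i by auto
qed

lemma dirpath:
  assumes "(v, b) \<in> E\<^sup>+" "b \<in> B" "v \<notin> B"
  shows "\<exists>ns2. walk (del_out E B) ns2 (replicate (length ns2 - 1) True) \<and> hd ns2 = v \<and>
     last ns2 \<in> B \<and> length ns2 \<ge> 2 \<and> (\<forall>j < length ns2. (v, ns2 ! j) \<in> E\<^sup>*)"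
  using assms
proof (induction v rule: converse_trancl_induct)
  case (base v)
  have "walk (del_out E B) [v, b] [True]" using base by (auto simp: walk_def del_out_def)
  moreover have "\<forall>j < 2. (v, [v, b] ! j) \<in> E\<^sup>*" using base by (auto simp: less_2_cases_iff)
  ultimately show ?case using base by (intro exI[of _ "[v, b]"]) auto
next
  case (step v y)
  have e: "walk (del_out E B) [v, y] [True]" using step by (auto simp: walk_def del_out_def)
  show ?case
  proof (cases "y \<in> B")
    case True
    have "\<forall>j < 2. (v, [v, y] ! j) \<in> E\<^sup>*" using step by (auto simp: less_2_cases_iff)
    then show ?thesis using e True by (intro exI[of _ "[v, y]"]) auto
  next
    case False
    then obtain ns2 where n2: "walk (del_out E B) ns2 (replicate (length ns2 - 1) True)" "hd ns2 = y"
      "last ns2 \<in> B" "length ns2 \<ge> 2" "\<forall>j < length ns2. (y, ns2 ! j) \<in> E\<^sup>*"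
      using step by blast
    have ne: "ns2 \<noteq> []" using n2 by auto
    have eq: "[v, y] @ tl ns2 = v # ns2" using n2(2) ne by (cases ns2) auto
    have w: "walk (del_out E B) (v # ns2) ([True] @ replicate (length ns2 - 1) True)"
      using walk_append[OF e n2(1)] n2(2) eq by simp
    have r: "[True] @ replicate (length ns2 - 1) True = replicate (length (v # ns2) - 1) True"
      using n2(4) by (cases "length ns2") auto
    have "\<forall>j < length (v # ns2). (v, (v # ns2) ! j) \<in> E\<^sup>*"
    proof (intro allI impI)
      fix j assume "j < length (v # ns2)"
      then show "(v, (v # ns2) ! j) \<in> E\<^sup>*"
      proof (cases j)
        case (Suc i)
        then have "(y, ns2 ! i) \<in> E\<^sup>*" using n2(5) \<open>j < length (v # ns2)\<close> by auto
        then show ?thesis using step(1) Suc by (simp add: converse_rtrancl_into_rtrancl)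
      qed simp
    qed
    then show ?thesis using w r n2 ne by (intro exI[of _ "v # ns2"]) auto
  qed
qed

lemma fix_walk:
  assumes w: "walk (del_out E B) ns ds" and h: "hd ns \<in> A" and l: "last ns \<in> B" and AB: "A \<inter> B = {}"
   and nc: "\<And>j. 0 < j \<Longrightarrow> j < length ns - 1 \<Longrightarrow> \<not> is_collider ds j \<Longrightarrow> ns ! j \<notin> B \<union> C"
   and co: "\<And>j. 0 < j \<Longrightarrow> j < length ns - 1 \<Longrightarrow> is_collider ds j \<Longrightarrow> ns ! j \<in> anc E (B \<union> C) \<union> (B \<union> C)"
  shows "\<exists>ns' ds'. walk (del_out E B) ns' ds' \<and> good E C ns' ds' \<and> hd ns' \<in> A \<and> last ns' \<in> B"
proof -
  have len: "length ds = length ns - 1" and ne: "ns \<noteq> []" using w by (auto simp: walk_def)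
  have l2: "length ns \<ge> 2"
  proof (rule ccontr)
    assume "\<not> length ns \<ge> 2"
    moreover have "length ns > 0" using ne by simp
    ultimately have "length ns = 1" by linarith
    then have "hd ns = last ns" using ne by (cases ns) auto
    then show False using h l AB by auto
  qed
  define P where "P k \<longleftrightarrow> 0 < k \<and> k < length ns \<and>
      (ns ! k \<in> B \<or> (k < length ns - 1 \<and> is_collider ds k \<and> ns ! k \<notin> anc E C \<union> C))" for k
  have Pl: "P (length ns - 1)" using l2 l ne by (auto simp: P_def last_conv_nth)
  define k where "k = (LEAST k. P k)"
  have Pk: "P k" using LeastI[of P, OF Pl] k_def by simp
  have mini: "\<not> P j" if "j < k" for j using not_less_Least[of j P] that k_def by simp
  have k0: "0 < k" and kl: "k < length ns" using Pk by (auto simp: P_def)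
  have gp: "good E C (take (Suc k) ns) (take k ds)"
    unfolding good_def
  proof (intro allI impI)
    fix j assume j: "0 < j \<and> j < length (take (Suc k) ns) - 1"
    then have jk: "j < k" and jl: "j < length ns - 1" using kl by auto
    have "ns ! j \<notin> B" "\<not> (is_collider ds j \<and> ns ! j \<notin> anc E C \<union> C)"
      using mini[OF jk] j jl by (auto simp: P_def)
    moreover have "is_collider (take k ds) j = is_collider ds j" using jk j len kl
      by (auto simp: is_collider_def)
    moreover have "take (Suc k) ns ! j = ns ! j" using jk by simp
    ultimately show "(\<not> is_collider (take k ds) j \<longrightarrow> take (Suc k) ns ! j \<notin> C) \<and>
         (is_collider (take k ds) j \<longrightarrow> take (Suc k) ns ! j \<in> anc E C \<union> C)"
      using nc[of j] j jl by auto
  qed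
  have wp: "walk (del_out E B) (take (Suc k) ns) (take k ds)" using walk_take[OF w kl] .
  have hp: "hd (take (Suc k) ns) \<in> A" using h ne by (cases ns) auto
  have lastp: "last (take (Suc k) ns) = ns ! k"
  proof -
    have "take (Suc k) ns \<noteq> []" using kl by (cases ns) auto
    then have "last (take (Suc k) ns) = take (Suc k) ns ! (length (take (Suc k) ns) - 1)" by (rule last_conv_nth)
    also have "length (take (Suc k) ns) - 1 = k" using kl by simp
    finally show ?thesis by simp
  qed
  show ?thesis
  proof (cases "ns ! k \<in> B")
    case True
    then have "last (take (Suc k) ns) \<in> B" using lastp by simp
    then show ?thesis using gp wp hp by blast
  next
    case False
    then have kint: "k < length ns - 1" and ck: "is_collider ds k" and nanc: "ns ! k \<notin> anc E C \<union> C"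
      using Pk by (auto simp: P_def)
    have "ns ! k \<in> anc E (B \<union> C) \<union> (B \<union> C)" using co[OF k0 kint ck] .
    then have "ns ! k \<in> anc E B" using False nanc by (auto simp: anc_def)
    then obtain b where b: "b \<in> B" "(ns ! k, b) \<in> E\<^sup>+" by (auto simp: anc_def)
    obtain ns2 where n2: "walk (del_out E B) ns2 (replicate (length ns2 - 1) True)" "hd ns2 = ns ! k"
      "last ns2 \<in> B" "length ns2 \<ge> 2" "\<forall>j < length ns2. (ns ! k, ns2 ! j) \<in> E\<^sup>*"
      using dirpath[OF b(2) b(1) False] by blast
    have ne2: "ns2 \<noteq> []" using n2 by auto
    have j: "last (take (Suc k) ns) = hd ns2" using lastp n2 by simp
    have g2: "good E C ns2 (replicate (length ns2 - 1) True)"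
      unfolding good_def
    proof (intro allI impI)
      fix i assume i: "0 < i \<and> i < length ns2 - 1"
      have "ns2 ! i \<notin> C"
      proof
        assume "ns2 ! i \<in> C"
        then have "ns ! k \<in> anc E C \<union> C" using anc_up[of "ns ! k" "ns2 ! i" E C] n2(5) i by auto
        then show False using nanc by simp
      qed
      moreover have "\<not> is_collider (replicate (length ns2 - 1) True) i" using i by (simp add: is_collider_def)
      ultimately show "(\<not> is_collider (replicate (length ns2 - 1) True) i \<longrightarrow> ns2 ! i \<notin> C) \<and>
        (is_collider (replicate (length ns2 - 1) True) i \<longrightarrow> ns2 ! i \<in> anc E C \<union> C)" by simp
    qed
    have vC: "ns ! k \<notin> C" using nanc by simp
    have jn: "(\<not> (last (take k ds) \<and> \<not> hd (replicate (length ns2 - 1) True)) \<longrightarrow> hd ns2 \<notin> C) \<and>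
       (last (take k ds) \<and> \<not> hd (replicate (length ns2 - 1) True) \<longrightarrow> hd ns2 \<in> anc E C \<union> C)"
      if "take k ds \<noteq> []" "replicate (length ns2 - 1) True \<noteq> []"
      using that vC n2(2) by (cases "length ns2 - 1") auto
    have w': "walk (del_out E B) (take (Suc k) ns @ tl ns2) (take k ds @ replicate (length ns2 - 1) True)"
      using walk_append[OF wp n2(1) j] .
    have g': "good E C (take (Suc k) ns @ tl ns2) (take k ds @ replicate (length ns2 - 1) True)"
      using good_append[OF wp n2(1) j gp g2 jn] by blast
    have "hd (take (Suc k) ns @ tl ns2) \<in> A" using hp ne by (cases ns) auto
    moreover have "last (take (Suc k) ns @ tl ns2) \<in> B" using last_app[OF _ ne2 j] n2(3) ne by simp
    ultimately show ?thesis using w' g' by blast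
  qed
qed

lemma trancl_time:
  fixes Et :: "(('v \<times> nat) \<times> ('v \<times> nat)) set"
  assumes "(x, y) \<in> Et\<^sup>+" "\<And>x y. (x, y) \<in> Et \<Longrightarrow> snd x < snd y"
  shows "snd x < snd y"
  using assms(1)
proof (induction rule: trancl_induct)
  case (base y) then show ?case using assms(2) by blast
next
  case (step y z) then show ?case using assms(2)[OF step(2)] by linarith
qed

lemma trancl_proj:
  assumes "(x, y) \<in> Et\<^sup>+" "\<And>x y. (x, y) \<in> Et \<Longrightarrow> (fst x, fst y) \<in> E"
  shows "(fst x, fst y) \<in> E\<^sup>+"
  using assms(1)
proof (induction rule: trancl_induct)
  case (base y) then show ?case using assms(2) by blast
next
  case (step y z) then show ?case using assms(2)[of y z] by (meson trancl.trancl_into_trancl)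
qed

lemma oriented:
  fixes Et :: "(('v \<times> nat) \<times> ('v \<times> nat)) set"
  assumes Et_nodes: "Et \<subseteq> unrolled_nodes V W t' \<times> unrolled_nodes V W t'"
    and Et_time: "\<And>x y. (x, y) \<in> Et \<Longrightarrow> snd x < snd y"
    and Et_E: "\<And>x y. (x, y) \<in> Et \<Longrightarrow> (fst x, fst y) \<in> E"
    and AB: "A \<inter> B = {}" and dsep: "delta_sep E A B C" and t1: "1 \<le> t"
    and p: "is_path Et ns ds" and g: "good Et (past_nodes V W (B \<union> C) (t - 1)) ns ds"
    and h: "hd ns \<in> past_nodes V W A (t - 1)" and l: "last ns \<in> now_nodes B t"
  shows False
proof -
  let ?c = "past_nodes V W (B \<union> C) (t - 1)"
  have w: "walk Et ns ds" using p path_walk by auto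
  have len: "length ds = length ns - 1" and ne: "ns \<noteq> []" using w by (auto simp: walk_def)
  define n where "n = length ns"
  have n0: "n > 0" using ne n_def by simp
  have h0: "snd (ns ! 0) \<le> t - 1" "fst (ns ! 0) \<in> A"
    using h ne by (auto simp: past_nodes_def unrolled_nodes_def hd_conv_nth)
  have lt: "snd (ns ! (n - 1)) = t" "fst (ns ! (n - 1)) \<in> B"
    using l ne by (auto simp: now_nodes_def last_conv_nth n_def)
  have n2: "n \<ge> 2"
  proof (rule ccontr)
    assume "\<not> n \<ge> 2"
    then have "n - 1 = 0" by simp
    then show False using h0 lt t1 by simp
  qed
  have tm_edge: "(ds ! k \<longrightarrow> snd (ns ! k) < snd (ns ! Suc k)) \<and> (\<not> ds ! k \<longrightarrow> snd (ns ! Suc k) < snd (ns ! k))"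
    if "k < n - 1" for k
    using walk_edgeE[OF w, of k] that len n_def Et_time by (auto split: if_splits)
  have innodes: "ns ! j \<in> unrolled_nodes V W t'" if "j < n" for j
  proof (cases "j < n - 1")
    case True
    then show ?thesis using walk_edgeE[OF w, of j] len n_def Et_nodes by (auto split: if_splits)
  next
    case False
    then have j: "j = Suc (n - 2)" using that n2 by auto
    have "n - 2 < length ds" using len n_def n2 by auto
    then show ?thesis using walk_edgeE[OF w, of "n - 2"] j Et_nodes by (auto split: if_splits)
  qed
  have c_time: "snd x \<le> t - 1" if "x \<in> ?c" for x
    using that by (auto simp: past_nodes_def unrolled_nodes_def)
  have early: "snd (ns ! j) < t" if "j < n - 1" for j
  proof -
    define m where "m = Max ((\<lambda>j. snd (ns ! j)) ` {..<n - 1})"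
    have fin: "finite ((\<lambda>j. snd (ns ! j)) ` {..<n - 1})" by simp
    have "0 \<in> {..<n - 1}" using n2 by simp
    then have nem: "(\<lambda>j. snd (ns ! j)) ` {..<n - 1} \<noteq> {}" by blast
    obtain k where k: "k < n - 1" "snd (ns ! k) = m" using Max_in[OF fin nem] m_def by auto
    have bound: "snd (ns ! i) \<le> m" if "i < n - 1" for i using Max_ge[OF fin] that m_def by auto
    have "m < t"
    proof (rule ccontr)
      assume "\<not> m < t"
      then have mt: "t \<le> m" by simp
      have k0: "k \<noteq> 0"
      proof
        assume "k = 0"
        then show False using k h0 mt t1 by auto
      qed
      have b1: "snd (ns ! (k - 1)) \<le> m" using bound[of "k - 1"] k by auto
      have b2: "snd (ns ! Suc k) \<le> m"
      proof (cases "Suc k < n - 1")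
        case True then show ?thesis using bound by blast
      next
        case False then have "Suc k = n - 1" using k by auto
        then show ?thesis using lt mt by simp
      qed
      have d1: "ds ! (k - 1)" using tm_edge[of "k - 1"] k k0 b1 by auto
      have d2: "\<not> ds ! k" using tm_edge[of k] k b2 by auto
      have col: "is_collider ds k" using d1 d2 by (simp add: is_collider_def)
      have "ns ! k \<in> anc Et ?c \<union> ?c" using g col k k0 n_def unfolding good_def by auto
      then show False
      proof
        assume "ns ! k \<in> anc Et ?c"
        then obtain x where "x \<in> ?c" "(ns ! k, x) \<in> Et\<^sup>+" by (auto simp: anc_def)
        then show False using trancl_time[of "ns ! k" x Et] Et_time c_time[of x] k mt t1 by auto
      next
        assume "ns ! k \<in> ?c"
        then show False using c_time k mt t1 by fastforce
      qed
    qed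
    then show ?thesis using bound[OF that] by simp
  qed
  have lastedge: "ds ! (n - 2)"
  proof (rule ccontr)
    assume "\<not> ds ! (n - 2)"
    then have "snd (ns ! Suc (n - 2)) < snd (ns ! (n - 2))" using tm_edge[of "n - 2"] n2 by auto
    moreover have "Suc (n - 2) = n - 1" using n2 by auto
    ultimately show False using early[of "n - 2"] lt n2 by auto
  qed
  have in_past: "ns ! j \<in> unrolled_nodes V W (t - 1)" if "j < n - 1" for j
  proof -
    have "j < n" using that by simp
    then have a: "ns ! j \<in> unrolled_nodes V W t'" by (rule innodes)
    have b: "snd (ns ! j) < t" using early[OF that] .
    obtain i s where "ns ! j = (i, s)" by (cases "ns ! j")
    then show ?thesis using a b by (auto simp: unrolled_nodes_def)
  qed
  have H1: "fst (ns ! j) \<notin> B \<union> C" if "0 < j" "j < n - 1" "\<not> is_collider ds j" for j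
  proof
    assume a: "fst (ns ! j) \<in> B \<union> C"
    have "ns ! j \<notin> ?c" using g that n_def unfolding good_def by auto
    moreover have "ns ! j \<in> ?c" using in_past[OF that(2)] a
      by (cases "ns ! j") (auto simp: past_nodes_def)
    ultimately show False by simp
  qed
  have H2: "fst (ns ! j) \<in> anc E (B \<union> C) \<union> (B \<union> C)" if "0 < j" "j < n - 1" "is_collider ds j" for j
  proof -
    have "ns ! j \<in> anc Et ?c \<union> ?c" using g that n_def unfolding good_def by auto
    then show ?thesis
    proof
      assume "ns ! j \<in> ?c" then show ?thesis by (auto simp: past_nodes_def)
    next
      assume "ns ! j \<in> anc Et ?c"
      then obtain x where x: "x \<in> ?c" "(ns ! j, x) \<in> Et\<^sup>+" by (auto simp: anc_def)
      have "(fst (ns ! j), fst x) \<in> E\<^sup>+" using trancl_proj[OF x(2)] Et_E by blast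
      moreover have "fst x \<in> B \<union> C" using x(1) by (auto simp: past_nodes_def)
      ultimately show ?thesis unfolding anc_def by (cases "fst (ns ! j) = fst x") auto
    qed
  qed
  define pns where "pns = map fst ns"
  have wp: "walk (del_out E B) pns ds"
    unfolding walk_def
  proof (intro conjI allI impI)
    show "pns \<noteq> []" "length ds = length pns - 1" using ne len pns_def by auto
    fix k assume k: "k < length ds"
    then have kn: "k < n - 1" using len n_def by simp
    show "if ds ! k then (pns ! k, pns ! Suc k) \<in> del_out E B else (pns ! Suc k, pns ! k) \<in> del_out E B"
    proof (cases "ds ! k")
      case True
      have e: "(ns ! k, ns ! Suc k) \<in> Et" using walk_edgeE[OF w k] True by simp
      have "fst (ns ! k) \<notin> B"
      proof (cases "k = 0")
        case True then show ?thesis using h0 AB by auto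
      next
        case False
        have "\<not> is_collider ds k" using \<open>ds ! k\<close> by (simp add: is_collider_def)
        then show ?thesis using H1[of k] False kn by auto
      qed
      then show ?thesis using True Et_E[OF e] k len pns_def by (auto simp: del_out_def)
    next
      case False
      have e: "(ns ! Suc k, ns ! k) \<in> Et" using walk_edgeE[OF w k] False by simp
      have sk: "Suc k < n - 1"
      proof (rule ccontr)
        assume "\<not> Suc k < n - 1"
        then have "k = n - 2" using kn by auto
        then show False using lastedge False by simp
      qed
      have "\<not> is_collider ds (Suc k)" using False by (simp add: is_collider_def)
      then have "fst (ns ! Suc k) \<notin> B" using H1[of "Suc k"] sk by auto
      then show ?thesis using False Et_E[OF e] k len pns_def sk n_def by (auto simp: del_out_def)
    qed
  qed
  have hp: "hd pns \<in> A" using h0 ne pns_def by (simp add: hd_conv_nth hd_map)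
  have lp: "last pns \<in> B" using lt ne pns_def n_def by (simp add: last_conv_nth last_map)
  have lpn: "length pns = n" using pns_def n_def by simp
  obtain ns' ds' where f: "walk (del_out E B) ns' ds'" "good E C ns' ds'" "hd ns' \<in> A" "last ns' \<in> B"
    using fix_walk[OF wp hp lp AB, of C] H1 H2 lpn pns_def n_def by auto
  have sub: "del_out E B \<subseteq> E" by (auto simp: del_out_def)
  obtain ns'' ds'' where q: "is_path (del_out E B) ns'' ds''" "good E C ns'' ds''" "hd ns'' = hd ns'" "last ns'' = last ns'"
    using walk_to_path[OF f(1) sub f(2)] by blast
  have "blocked E C ns'' ds''" using dsep q f unfolding delta_sep_def by auto
  then show False using q(2) blocked_good by blast
qed

lemma graph_dsep:
  fixes Et :: "(('v \<times> nat) \<times> ('v \<times> nat)) set"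
  assumes Et_nodes: "Et \<subseteq> unrolled_nodes V W t' \<times> unrolled_nodes V W t'"
    and Et_time: "\<And>x y. (x, y) \<in> Et \<Longrightarrow> snd x < snd y"
    and Et_E: "\<And>x y. (x, y) \<in> Et \<Longrightarrow> (fst x, fst y) \<in> E"
    and AB: "A \<inter> B = {}" and dsep: "delta_sep E A B C" and t1: "1 \<le> t"
  shows "d_sep Et (past_nodes V W A (t - 1)) (now_nodes B t) (past_nodes V W (B \<union> C) (t - 1))"
  unfolding d_sep_def
proof (intro allI impI)
  fix ns ds
  assume a: "is_path Et ns ds \<and>
       (hd ns \<in> past_nodes V W A (t - 1) \<and> last ns \<in> now_nodes B t \<or>
        hd ns \<in> now_nodes B t \<and> last ns \<in> past_nodes V W A (t - 1))"
  show "blocked Et (past_nodes V W (B \<union> C) (t - 1)) ns ds"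
  proof (rule ccontr)
    assume "\<not> blocked Et (past_nodes V W (B \<union> C) (t - 1)) ns ds"
    then have g: "good Et (past_nodes V W (B \<union> C) (t - 1)) ns ds" using blocked_good by blast
    have p: "is_path Et ns ds" using a by blast
    then have w: "walk Et ns ds" and dn: "distinct ns" using path_walk by auto
    have ne: "ns \<noteq> []" using w by (auto simp: walk_def)
    from a show False
    proof (elim conjE disjE)
      assume "hd ns \<in> past_nodes V W A (t - 1)" "last ns \<in> now_nodes B t"
      then show False using oriented[OF Et_nodes Et_time Et_E AB dsep t1 p g] by blast
    next
      assume h: "hd ns \<in> now_nodes B t" "last ns \<in> past_nodes V W A (t - 1)"
      have p': "is_path Et (rev ns) (rev (map Not ds))" using walk_rev[OF w] dn by (simp add: path_walk)
      have g': "good Et (past_nodes V W (B \<union> C) (t - 1)) (rev ns) (rev (map Not ds))"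
        using good_rev[OF w g] .
      have "hd (rev ns) = last ns" "last (rev ns) = hd ns" using ne by (auto simp: hd_rev last_rev)
      then show False using oriented[OF Et_nodes Et_time Et_E AB dsep t1 p' g'] h by auto
    qed
  qed
qed

theorem proposition1:
  fixes M :: "'a measure" and V W :: "'v set" and X :: "'v \<Rightarrow> nat \<Rightarrow> 'a \<Rightarrow> real"
    and t' :: nat and E :: "('v \<times> 'v) set" and Et :: "(('v \<times> nat) \<times> ('v \<times> nat)) set"
    and A B C :: "'v set"
  assumes "time_series M V W X"
    and "t' \<ge> 1"
    and "proper_pair V W t' E Et"
    and "no_contemporaneous Et"
    and "dsep_markov M V W t' X Et"
    and "A \<subseteq> V \<union> W" and "B \<subseteq> V" and "C \<subseteq> V \<union> W"
    and "A \<inter> B = {}" and "A \<inter> C = {}" and "B \<inter> C = {}"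
    and "delta_sep E A B C"
  shows "locally_indep M V W X A B C t'"
proof -
  have pp: "is_unrolled_DAG V W t' Et" "E = roll Et \<or> Et = unroll V W t' E"
    using assms(3) by (auto simp: proper_pair_def)
  have Et_nodes: "Et \<subseteq> unrolled_nodes V W t' \<times> unrolled_nodes V W t'"
    using pp(1) by (simp add: is_unrolled_DAG_def)
  have Et_time: "snd x < snd y" if "(x, y) \<in> Et" for x y
  proof -
    obtain i s j u where xy: "x = (i, s)" "y = (j, u)" by (cases x, cases y)
    have "s \<le> u" using pp(1) that xy by (auto simp: is_unrolled_DAG_def)
    moreover have "s \<noteq> u" using assms(4) that xy by (auto simp: no_contemporaneous_def)
    ultimately show ?thesis using xy by simp
  qed
  have Et_E: "(fst x, fst y) \<in> E" if "(x, y) \<in> Et" for x y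
  proof -
    obtain i s j u where xy: "x = (i, s)" "y = (j, u)" by (cases x, cases y)
    have "s < u" using Et_time[OF that] xy by simp
    from pp(2) show ?thesis
    proof
      assume "E = roll Et" then show ?thesis using that xy \<open>s < u\<close> by (auto simp: roll_def)
    next
      assume "Et = unroll V W t' E" then show ?thesis using that xy by (auto simp: unroll_def)
    qed
  qed
  show ?thesis
    unfolding locally_indep_def
  proof
    fix t assume t: "t \<in> {1..t'}"
    let ?a = "past_nodes V W A (t - 1)" and ?b = "now_nodes B t" and ?c = "past_nodes V W (B \<union> C) (t - 1)"
    have ds: "d_sep Et ?a ?b ?c" using graph_dsep[OF Et_nodes Et_time Et_E assms(9) assms(12)] t by auto
    have sub: "past_nodes V W D (t - 1) \<subseteq> unrolled_nodes V W t'" for D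
      using t by (auto simp: past_nodes_def unrolled_nodes_def)
    have subb: "?b \<subseteq> unrolled_nodes V W t'" using t assms(7) by (auto simp: now_nodes_def unrolled_nodes_def)
    have d1: "?a \<inter> ?b = {}" using assms(9) by (auto simp: past_nodes_def now_nodes_def)
    have d2: "?a \<inter> ?c = {}" using assms(9,10) by (auto simp: past_nodes_def)
    have d3: "?b \<inter> ?c = {}" using t by (auto simp: past_nodes_def now_nodes_def unrolled_nodes_def)
    show "cond_indep M (node_var X) ?a ?b ?c"
      using assms(5)[unfolded dsep_markov_def, rule_format, of ?a ?b ?c] sub subb d1 d2 d3 ds by blast
  qed
qed

end
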